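(* Let $G$ be a strongly connected network on $\mathcal{V}$ with stationary distribution $\pi$. For all $i,j,m\in\mathcal{V}$: (1) $\boldsymbol{F}_{iij}=\pi_iC_{ij}$; (2) $\dfrac{\boldsymbol{F}_{imj}}{\pi_m}+\dfrac{\boldsymbol{F}_{mij}}{\pi_i}=C_{ij}+C_{jm}-C_{im}$; (3) $\dfrac{\boldsymbol{F}_{imj}}{\pi_m}+\dfrac{\boldsymbol{F}_{ijm}}{\pi_j}=C_{jm}$; (4) $\boldsymbol{F}_{imj}+\boldsymbol{F}_{jmi}=\pi_mC_{ij}$.
   Context: The random walk on $G$ has transition matrix $P=D^{-1}A$ for a nonnegative affinity matrix $A$; strongly connected means all nodes mutually reachable. For target $t$ and $\mathcal{T}=\mathcal{V}\setminus\{t\}$, $F^{\{t\}}=(I-P_{\mathcal{T}\mathcal{T}})^{-1}$, and the fundamental tensor is $\boldsymbol{F}_{smt}=F^{\{t\}}_{sm}$ if $s,m\neq t$ and $0$ otherwise (so $\boldsymbol{F}_{imj}=F^{\{j\}}_{im}$). $H_i^{\{j\}}$ is the expected number of steps for the walk started at $i$ to first hit $j$ ($0$ if $i=j$), and the commute time is $C_{ij}=H_i^{\{j\}}+H_j^{\{i\}}$. *)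

theory Defs
  imports Complex_Main
begin

text \<open>Vertices are the elements of a finite type 'a (so the vertex set is UNIV).
  The network is given by a nonnegative affinity matrix A.\<close>

definition degree :: "('a::finite \<Rightarrow> 'a \<Rightarrow> real) \<Rightarrow> 'a \<Rightarrow> real" where
  "degree A i = (\<Sum>j\<in>UNIV. A i j)"

definition trans_mat :: "('a::finite \<Rightarrow> 'a \<Rightarrow> real) \<Rightarrow> 'a \<Rightarrow> 'a \<Rightarrow> real" where
  "trans_mat A i j = A i j / degree A i"

definition strongly_connected :: "('a \<Rightarrow> 'a \<Rightarrow> real) \<Rightarrow> bool" where
  "strongly_connected A \<longleftrightarrow> (\<forall>i j. (i, j) \<in> {(x, y). A x y > 0}\<^sup>*)"

definition stationary_distribution :: "('a::finite \<Rightarrow> 'a \<Rightarrow> real) \<Rightarrow> ('a \<Rightarrow> real) \<Rightarrow> bool" where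
  "stationary_distribution P \<pi> \<longleftrightarrow>
     (\<forall>i. \<pi> i \<ge> 0) \<and> (\<Sum>i\<in>UNIV. \<pi> i) = 1 \<and> (\<forall>j. (\<Sum>i\<in>UNIV. \<pi> i * P i j) = \<pi> j)"

text \<open>F^{t} = (I - P_TT)^{-1} with T = V - {t}, extended by zero outside T x T.\<close>
definition fund_mat :: "('a::finite \<Rightarrow> 'a \<Rightarrow> real) \<Rightarrow> 'a \<Rightarrow> 'a \<Rightarrow> 'a \<Rightarrow> real" where
  "fund_mat P t = (THE F.
     (\<forall>s\<in>-{t}. \<forall>m\<in>-{t}. (\<Sum>k\<in>-{t}. F s k * ((if k = m then 1 else 0) - P k m))
                          = (if s = m then 1 else 0)) \<and>
     (\<forall>s m. (s = t \<or> m = t) \<longrightarrow> F s m = 0))"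

definition fund_tensor :: "('a::finite \<Rightarrow> 'a \<Rightarrow> real) \<Rightarrow> 'a \<Rightarrow> 'a \<Rightarrow> 'a \<Rightarrow> real" where
  "fund_tensor P s m t = (if s \<noteq> t \<and> m \<noteq> t then fund_mat P t s m else 0)"

definition first_hit_prob :: "('a::finite \<Rightarrow> 'a \<Rightarrow> real) \<Rightarrow> 'a \<Rightarrow> 'a \<Rightarrow> nat \<Rightarrow> real" where
  "first_hit_prob P i j n =
     (\<Sum>xs\<in>{xs. length xs = Suc n \<and> xs ! 0 = i \<and> xs ! n = j \<and> (\<forall>k<n. xs ! k \<noteq> j)}.
        \<Prod>k<n. P (xs ! k) (xs ! Suc k))"

text \<open>Expected first hitting time H_i^{j} = E[T] = sum_n n * Pr(T = n) (0 if i = j).\<close>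
definition hitting_time :: "('a::finite \<Rightarrow> 'a \<Rightarrow> real) \<Rightarrow> 'a \<Rightarrow> 'a \<Rightarrow> real" where
  "hitting_time P i j = (\<Sum>n. real n * first_hit_prob P i j n)"

definition commute_time :: "('a::finite \<Rightarrow> 'a \<Rightarrow> real) \<Rightarrow> 'a \<Rightarrow> 'a \<Rightarrow> real" where
  "commute_time P i j = hitting_time P i j + hitting_time P j i"

end

theory Submission
  imports Defs
begin

fun fr :: "('a::finite \<Rightarrow> 'a \<Rightarrow> real) \<Rightarrow> 'a \<Rightarrow> 'a \<Rightarrow> nat \<Rightarrow> real" where
  "fr P j i 0 = (if i = j then 1 else 0)"
| "fr P j i (Suc n) = (if i = j then 0 else (\<Sum>k\<in>UNIV. P i k * fr P j k n))"

fun sv :: "('a::finite \<Rightarrow> 'a \<Rightarrow> real) \<Rightarrow> 'a \<Rightarrow> 'a \<Rightarrow> nat \<Rightarrow> real" where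
  "sv P j i 0 = (if i = j then 0 else 1)"
| "sv P j i (Suc n) = (if i = j then 0 else (\<Sum>l\<in>UNIV. P i l * sv P j l n))"

lemma fhp_eq_fr: "first_hit_prob P i j n = fr P j i n"
proof (induction n arbitrary: i)
  case 0
  show ?case
  proof (cases "i = j")
    case True
    have "{xs. length xs = Suc 0 \<and> xs ! 0 = i \<and> xs ! 0 = j \<and> (\<forall>k<0. xs ! k \<noteq> j)} = {[i]}"
      using True by (auto simp: length_Suc_conv)
    then show ?thesis using True by (simp add: first_hit_prob_def)
  next
    case False
    then have e: "{xs. length xs = Suc 0 \<and> xs ! 0 = i \<and> xs ! 0 = j} = {}"
      by auto
    then show ?thesis using False by (simp add: first_hit_prob_def, subst e, simp)
  qed
next
  case (Suc n)
  show ?case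
  proof (cases "i = j")
    case True
    then have e: "{xs. length xs = Suc (Suc n) \<and> xs ! 0 = i \<and> xs ! Suc n = j \<and> (\<forall>k<Suc n. xs ! k \<noteq> j)} = {}"
      by auto
    show ?thesis using True unfolding first_hit_prob_def e by simp
  next
    case False
    define U where "U = {ys. length ys = Suc n \<and> ys ! n = j \<and> (\<forall>k<n. ys ! k \<noteq> j)}"
    have finU: "finite U"
      by (rule finite_subset[OF _ finite_lists_length_eq[of "UNIV::'a set" "Suc n"]]) (auto simp: U_def)
    have S: "{xs. length xs = Suc (Suc n) \<and> xs ! 0 = i \<and> xs ! Suc n = j \<and> (\<forall>k<Suc n. xs ! k \<noteq> j)}
        = Cons i ` U"
    proof (rule set_eqI, rule iffI)
      fix xs assume xs: "xs \<in> {xs. length xs = Suc (Suc n) \<and> xs ! 0 = i \<and> xs ! Suc n = j \<and> (\<forall>k<Suc n. xs ! k \<noteq> j)}"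
      then obtain x ys where xys: "xs = x # ys" by (cases xs) auto
      have "ys \<in> U" using xs xys by (auto simp: U_def)
      then show "xs \<in> Cons i ` U" using xs xys by auto
    next
      fix xs assume "xs \<in> Cons i ` U"
      then obtain ys where ys: "ys \<in> U" "xs = i # ys" by auto
      have "\<forall>k<Suc n. xs ! k \<noteq> j"
      proof (intro allI impI)
        fix k assume "k < Suc n"
        then show "xs ! k \<noteq> j" using ys False by (cases k) (auto simp: U_def)
      qed
      then show "xs \<in> {xs. length xs = Suc (Suc n) \<and> xs ! 0 = i \<and> xs ! Suc n = j \<and> (\<forall>k<Suc n. xs ! k \<noteq> j)}"
        using ys by (auto simp: U_def)
    qed
    define g where "g ys = (\<Prod>k<n. P (ys ! k) (ys ! Suc k))" for ys
    have "first_hit_prob P i j (Suc n) = (\<Sum>xs\<in>Cons i ` U. \<Prod>k<Suc n. P (xs ! k) (xs ! Suc k))"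
      unfolding first_hit_prob_def S ..
    also have "\<dots> = (\<Sum>ys\<in>U. \<Prod>k<Suc n. P ((i#ys) ! k) ((i#ys) ! Suc k))"
      by (subst sum.reindex) auto
    also have "\<dots> = (\<Sum>ys\<in>U. P i (ys ! 0) * g ys)"
      by (simp only: prod.lessThan_Suc_shift nth_Cons_0 nth_Cons_Suc g_def)
    also have "\<dots> = (\<Sum>k\<in>UNIV. \<Sum>ys\<in>{ys\<in>U. ys ! 0 = k}. P i (ys ! 0) * g ys)"
      by (rule sum.group[symmetric]) (auto simp: finU)
    also have "\<dots> = (\<Sum>k\<in>UNIV. P i k * fr P j k n)"
    proof (rule sum.cong[OF refl])
      fix k :: 'a
      have e: "{ys\<in>U. ys ! 0 = k} = {xs. length xs = Suc n \<and> xs ! 0 = k \<and> xs ! n = j \<and> (\<forall>k<n. xs ! k \<noteq> j)}"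
        by (auto simp: U_def)
      have "(\<Sum>ys\<in>{ys\<in>U. ys ! 0 = k}. P i (ys ! 0) * g ys) = (\<Sum>ys\<in>{ys\<in>U. ys ! 0 = k}. P i k * g ys)"
        by (rule sum.cong) auto
      also have "\<dots> = P i k * first_hit_prob P k j n"
        by (simp add: sum_distrib_left e first_hit_prob_def g_def)
      finally show "(\<Sum>ys\<in>{ys\<in>U. ys ! 0 = k}. P i (ys ! 0) * g ys) = P i k * fr P j k n"
        using Suc.IH by simp
    qed
    finally show ?thesis using False by simp
  qed
qed

locale mc =
  fixes P :: "'a::finite \<Rightarrow> 'a \<Rightarrow> real"
  assumes P_nonneg: "\<And>i j. 0 \<le> P i j"
    and P_rows: "\<And>i. (\<Sum>j\<in>UNIV. P i j) = 1"
    and P_conn: "\<And>i j. (i, j) \<in> {(x, y). P x y > 0}\<^sup>*"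
begin

lemma sv_jj [simp]: "sv P j j n = 0"
  by (cases n) auto

lemma sv_bounds: "0 \<le> sv P j i n \<and> sv P j i n \<le> 1"
proof (induction n arbitrary: i)
  case 0
  then show ?case by simp
next
  case (Suc n)
  show ?case
  proof (cases "i = j")
    case False
    have "(\<Sum>l\<in>UNIV. P i l * sv P j l n) \<le> (\<Sum>l\<in>UNIV. P i l)"
      by (rule sum_mono) (use Suc P_nonneg in \<open>simp add: mult_left_le\<close>)
    moreover have "0 \<le> (\<Sum>l\<in>UNIV. P i l * sv P j l n)"
      by (rule sum_nonneg) (use Suc P_nonneg in simp)
    ultimately show ?thesis using False P_rows by simp
  qed simp
qed

lemma sv_nonneg: "0 \<le> sv P j i n" and sv_le1: "sv P j i n \<le> 1"
  using sv_bounds by auto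

lemma sv_scale:
  assumes c: "\<And>l. sv P j l n \<le> c"
  shows "sv P j i (n + m) \<le> c * sv P j i m"
proof (induction m arbitrary: i)
  case 0
  then show ?case using c[of i] by simp
next
  case (Suc m)
  show ?case
  proof (cases "i = j")
    case False
    have "(\<Sum>l\<in>UNIV. P i l * sv P j l (n + m)) \<le> (\<Sum>l\<in>UNIV. P i l * (c * sv P j l m))"
      by (rule sum_mono) (use Suc P_nonneg in \<open>simp add: mult_left_mono\<close>)
    also have "\<dots> = c * (\<Sum>l\<in>UNIV. P i l * sv P j l m)"
      by (simp add: sum_distrib_left mult_ac)
    finally show ?thesis using False by simp
  next
    case True
    have "0 \<le> c" using c[of j] by simp
    then show ?thesis using True by simp
  qed
qed

lemma sv_Suc_le: "sv P j i (Suc n) \<le> sv P j i n"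
proof -
  have "sv P j i (1 + n) \<le> 1 * sv P j i n" by (rule sv_scale) (rule sv_le1)
  then show ?thesis by (simp del: sv.simps)
qed

lemma sv_antimono: "n \<le> n' \<Longrightarrow> sv P j i n' \<le> sv P j i n"
  by (rule lift_Suc_antimono_le[of "sv P j i"], rule sv_Suc_le, assumption)

lemma sv_reach: "\<exists>L. sv P j i L < 1"
proof -
  have "(i, j) \<in> {(x, y). P x y > 0}\<^sup>*" by (rule P_conn)
  then show ?thesis
  proof (induction rule: converse_rtrancl_induct)
    case base
    then show ?case by (rule exI[of _ 0]) simp
  next
    case (step y z)
    then obtain L where L: "sv P j z L < 1" by auto
    have pyz: "P y z > 0" using step by auto
    show ?case
    proof (cases "y = j")
      case True
      then show ?thesis by (rule_tac exI[of _ 0]) simp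
    next
      case False
      have "(\<Sum>l\<in>UNIV. P y l * sv P j l L) < (\<Sum>l\<in>UNIV. P y l)"
      proof (rule sum_strict_mono_ex1)
        show "\<forall>x\<in>UNIV. P y x * sv P j x L \<le> P y x"
          using P_nonneg sv_le1 by (simp add: mult_left_le)
        show "\<exists>a\<in>UNIV. P y a * sv P j a L < P y a"
          using pyz L by (intro bexI[of _ z]) auto
      qed simp
      then have "sv P j y (Suc L) < 1" using False P_rows by simp
      then show ?thesis by blast
    qed
  qed
qed

lemma sv_geom: "\<exists>C r. 0 < r \<and> r < 1 \<and> (\<forall>i n. sv P j i n \<le> C * r ^ n)"
proof -
  obtain L where L: "\<And>i. sv P j i (L i) < 1"
    using sv_reach by metis
  define N where "N = Suc (Max (range L))"
  have NL: "L i \<le> N" for i unfolding N_def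
    by (simp add: le_SucI)
  have N0: "0 < N" by (simp add: N_def)
  define \<rho> where "\<rho> = max (1/2) (Max (range (\<lambda>i. sv P j i N)))"
  have \<rho>1: "\<rho> < 1"
  proof -
    have "sv P j i N < 1" for i using sv_antimono[OF NL[of i], of j i] L[of i] by simp
    then have "Max (range (\<lambda>i. sv P j i N)) < 1" by (simp)
    then show ?thesis by (simp add: \<rho>_def)
  qed
  have \<rho>0: "0 < \<rho>" by (simp add: \<rho>_def)
  have svN: "sv P j i N \<le> \<rho>" for i
    unfolding \<rho>_def by (rule max.coboundedI2) simp
  have pk: "sv P j i (k * N) \<le> \<rho> ^ k" for k i
  proof (induction k arbitrary: i)
    case 0
    then show ?case using sv_le1 by simp
  next
    case (Suc k)
    have "sv P j i (k * N + N) \<le> \<rho> ^ k * sv P j i N"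
      by (rule sv_scale) (use Suc in auto)
    also have "\<dots> \<le> \<rho> ^ k * \<rho>"
      using svN \<rho>0 by (simp add: mult_left_mono)
    finally show ?case by (simp add: add.commute mult.commute)
  qed
  define r where "r = root N \<rho>"
  have r0: "0 < r" using N0 \<rho>0 by (simp add: r_def real_root_gt_zero)
  have r1: "r < 1" using N0 \<rho>1 by (simp add: r_def)
  have rN: "r ^ N = \<rho>" using N0 \<rho>0 by (simp add: r_def)
  have "sv P j i n \<le> (1 / \<rho>) * r ^ n" for i n
  proof -
    have "sv P j i n \<le> sv P j i ((n div N) * N)"
      by (rule sv_antimono) (simp add: div_times_less_eq_dividend)
    also have "\<dots> \<le> \<rho> ^ (n div N)" by (rule pk)
    also have "\<dots> = r ^ (N * (n div N))" by (simp add: power_mult rN)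
    also have "\<dots> \<le> r ^ n / \<rho>"
    proof -
      have "n \<le> N * (n div N) + N"
      proof -
        have "n = N * (n div N) + n mod N" by simp
        moreover have "n mod N < N" using N0 by simp
        ultimately show ?thesis by linarith
      qed
      then have "r ^ (N * (n div N) + N) \<le> r ^ n"
        by (rule power_decreasing) (use r0 r1 in auto)
      then have "r ^ (N * (n div N)) * \<rho> \<le> r ^ n"
        by (simp add: power_add rN)
      then show ?thesis using \<rho>0 by (simp add: field_simps)
    qed
    finally show ?thesis by simp
  qed
  then show ?thesis using r0 r1 by blast
qed

lemma sv_summable: "summable (\<lambda>n. sv P j i n)"
proof -
  obtain C r where Cr: "0 < r" "r < 1" "\<And>i n. sv P j i n \<le> C * r ^ n"
    using sv_geom by blast
  show ?thesis
    by (rule summable_comparison_test'[of "\<lambda>n. C * r ^ n" 0])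
       (use Cr sv_nonneg in \<open>auto intro!: summable_mult summable_geometric\<close>)
qed

lemma n_sv_lim: "(\<lambda>n. real n * sv P j i n) \<longlonglongrightarrow> 0"
proof -
  obtain C r where Cr: "0 < r" "r < 1" "\<And>i n. sv P j i n \<le> C * r ^ n"
    using sv_geom by blast
  have "(\<lambda>n. C * (real n * r ^ n)) \<longlonglongrightarrow> C * 0"
    by (rule tendsto_mult[OF tendsto_const powser_times_n_limit_0]) (use Cr in simp)
  then have h: "(\<lambda>n. C * (real n * r ^ n)) \<longlonglongrightarrow> 0" by simp
  have up: "real n * sv P j i n \<le> C * (real n * r ^ n)" for n
  proof -
    have "real n * sv P j i n \<le> real n * (C * r ^ n)"
      by (rule mult_left_mono) (use Cr in auto)
    then show ?thesis by (simp only: mult.left_commute)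
  qed
  have lo: "0 \<le> real n * sv P j i n" for n using sv_nonneg by simp
  show ?thesis
    by (rule real_tendsto_sandwich[OF always_eventually always_eventually tendsto_const h])
       (use up lo in auto)
qed

lemma fr_Suc: "fr P j k (Suc n) = sv P j k n - sv P j k (Suc n)"
proof (induction n arbitrary: k)
  case 0
  show ?case
  proof (cases "k = j")
    case False
    have e: "sv P j l 0 + fr P j l 0 = 1" for l by simp
    have "(\<Sum>l\<in>UNIV. P k l * sv P j l 0) + (\<Sum>l\<in>UNIV. P k l * fr P j l 0) = 1"
      by (simp add: sum.distrib[symmetric] distrib_left[symmetric] e P_rows del: sv.simps fr.simps)
    then show ?thesis using False by (simp only: fr.simps sv.simps if_False)
  qed simp
next
  case (Suc n)
  show ?case
  proof (cases "k = j")
    case False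
    have a: "fr P j k (Suc (Suc n)) = (\<Sum>l\<in>UNIV. P k l * fr P j l (Suc n))"
      by (simp only: fr.simps(2)[of P j k "Suc n"] if_not_P[OF False])
    have b: "sv P j k (Suc n) = (\<Sum>l\<in>UNIV. P k l * sv P j l n)"
      by (simp only: sv.simps(2)[of P j k n] if_not_P[OF False])
    have c: "sv P j k (Suc (Suc n)) = (\<Sum>l\<in>UNIV. P k l * sv P j l (Suc n))"
      by (simp only: sv.simps(2)[of P j k "Suc n"] if_not_P[OF False])
    show ?thesis unfolding a b c Suc.IH by (simp only: right_diff_distrib sum_subtractf)
  qed simp
qed

lemma hit_sums: "(\<lambda>n. real n * first_hit_prob P i j n) sums (\<Sum>n. sv P j i n)"
proof (cases "i = j")
  case True
  have "(\<lambda>n. real n * first_hit_prob P i j n) = (\<lambda>n. 0)"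
  proof
    fix n show "real n * first_hit_prob P i j n = 0"
      using True by (cases n) (auto simp: fhp_eq_fr)
  qed
  then show ?thesis using True by simp
next
  case False
  have ps: "(\<Sum>n<Suc M. real n * first_hit_prob P i j n) = (\<Sum>n<M. sv P j i n) - real M * sv P j i M" for M
  proof (induction M)
    case 0
    then show ?case by simp
  next
    case (Suc M)
    have "(\<Sum>n<Suc (Suc M). real n * first_hit_prob P i j n)
        = (\<Sum>n<M. sv P j i n) - real M * sv P j i M + real (Suc M) * (sv P j i M - sv P j i (Suc M))"
      using Suc by (simp add: fhp_eq_fr fr_Suc del: fr.simps)
    also have "\<dots> = (\<Sum>n<Suc M. sv P j i n) - real (Suc M) * sv P j i (Suc M)"
      by (simp add: algebra_simps)
    finally show ?case .
  qed
  have "(\<lambda>M. (\<Sum>n<M. sv P j i n) - real M * sv P j i M) \<longlonglongrightarrow> (\<Sum>n. sv P j i n) - 0"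
    by (intro tendsto_diff summable_LIMSEQ sv_summable n_sv_lim)
  then have "(\<lambda>M. \<Sum>n<Suc M. real n * first_hit_prob P i j n) \<longlonglongrightarrow> (\<Sum>n. sv P j i n)"
    by (simp only: ps diff_zero)
  then show ?thesis unfolding sums_def by (rule LIMSEQ_imp_Suc)
qed

lemma hit_eq: "hitting_time P i j = (\<Sum>n. sv P j i n)"
  unfolding hitting_time_def using hit_sums sums_unique by metis

lemma hit_jj [simp]: "hitting_time P j j = 0"
  by (simp add: hit_eq)

lemma hit_step:
  assumes "i \<noteq> j"
  shows "hitting_time P i j = 1 + (\<Sum>l\<in>UNIV. P i l * hitting_time P l j)"
proof -
  have "(\<Sum>n. sv P j i n) = sv P j i 0 + (\<Sum>n. sv P j i (Suc n))"
    using suminf_split_head[OF sv_summable[of j i]] by simp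
  also have "(\<Sum>n. sv P j i (Suc n)) = (\<Sum>n. \<Sum>l\<in>UNIV. P i l * sv P j l n)"
    using assms by simp
  also have "\<dots> = (\<Sum>l\<in>UNIV. \<Sum>n. P i l * sv P j l n)"
    by (rule suminf_sum) (intro summable_mult sv_summable)
  also have "\<dots> = (\<Sum>l\<in>UNIV. P i l * (\<Sum>n. sv P j l n))"
    by (intro sum.cong refl suminf_mult sv_summable)
  finally show ?thesis using assms by (simp add: hit_eq)
qed

end

locale mcpi = mc P for P :: "'a::finite \<Rightarrow> 'a \<Rightarrow> real" +
  fixes \<pi> :: "'a \<Rightarrow> real"
  assumes pi_nonneg: "\<And>i. 0 \<le> \<pi> i"
    and pi_sum: "(\<Sum>i\<in>UNIV. \<pi> i) = 1"
    and pi_stat: "\<And>j. (\<Sum>i\<in>UNIV. \<pi> i * P i j) = \<pi> j"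
begin

lemma pi_zero_pred:
  assumes "\<pi> z = 0" "P y z > 0"
  shows "\<pi> y = 0"
proof -
  have "(\<Sum>i\<in>UNIV. \<pi> i * P i z) = 0" using pi_stat[of z] assms by simp
  then have "\<pi> y * P y z = 0"
    using sum_nonneg_eq_0_iff[of UNIV "\<lambda>i. \<pi> i * P i z"] pi_nonneg P_nonneg by simp
  then show ?thesis using assms by simp
qed

lemma pi_pos: "0 < \<pi> m"
proof (rule ccontr)
  assume "\<not> 0 < \<pi> m"
  then have z: "\<pi> m = 0" using pi_nonneg[of m] by simp
  have "\<pi> k = 0" for k
  proof -
    have "(k, m) \<in> {(x, y). P x y > 0}\<^sup>*" by (rule P_conn)
    then show ?thesis
    proof (induction rule: converse_rtrancl_induct)
      case base then show ?case by (rule z)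
    next
      case (step y z) then show ?case using pi_zero_pred by auto
    qed
  qed
  then show False using pi_sum by simp
qed

lemma maxp:
  assumes vj: "v j = 0" and vs: "\<And>s. s \<noteq> j \<Longrightarrow> v s = (\<Sum>l\<in>UNIV. P s l * v l)"
  shows "v s \<le> 0"
proof (rule ccontr)
  assume "\<not> v s \<le> 0"
  define M where "M = Max (range v)"
  have vM: "v l \<le> M" for l unfolding M_def by simp
  have Mpos: "M > 0" using vM[of s] \<open>\<not> v s \<le> 0\<close> by simp
  obtain s0 where s0: "v s0 = M" unfolding M_def
    by (metis (mono_tags) Max_in finite_UNIV finite_imageI image_iff image_is_empty UNIV_not_empty)
  have cl: "v z = M" if "v y = M" "P y z > 0" for y z
  proof -
    have "y \<noteq> j" using that vj Mpos by auto
    then have "M = (\<Sum>l\<in>UNIV. P y l * v l)" using vs that by simp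
    then have "(\<Sum>l\<in>UNIV. P y l * (M - v l)) = 0"
      by (simp add: right_diff_distrib sum_subtractf sum_distrib_right[symmetric] P_rows mult.commute)
    then have "P y z * (M - v z) = 0"
      using sum_nonneg_eq_0_iff[of UNIV "\<lambda>l. P y l * (M - v l)"] P_nonneg vM by simp
    then show ?thesis using that by simp
  qed
  have "(s0, j) \<in> {(x, y). P x y > 0}\<^sup>*" by (rule P_conn)
  then have "v j = M"
  proof (induction rule: rtrancl_induct)
    case base then show ?case by (rule s0)
  next
    case (step y z) then show ?case using cl by auto
  qed
  then show False using vj Mpos by simp
qed

abbreviation H where "H i j \<equiv> hitting_time P i j"

lemma kac: "\<pi> m * (1 + (\<Sum>l\<in>UNIV. P m l * H l m)) = 1"
proof -
  define R where "R = 1 + (\<Sum>l\<in>UNIV. P m l * H l m)"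
  have e: "H k m + (if k = m then R else 0) = 1 + (\<Sum>l\<in>UNIV. P k l * H l m)" for k
    using hit_step[of k m] by (cases "k = m") (auto simp: R_def)
  have "(\<Sum>k\<in>UNIV. \<pi> k * (H k m + (if k = m then R else 0)))
      = (\<Sum>k\<in>UNIV. \<pi> k * (1 + (\<Sum>l\<in>UNIV. P k l * H l m)))"
    by (simp only: e)
  moreover have "(\<Sum>k\<in>UNIV. \<pi> k * (H k m + (if k = m then R else 0)))
      = (\<Sum>k\<in>UNIV. \<pi> k * H k m) + \<pi> m * R"
  proof -
    have f: "(\<lambda>k. \<pi> k * (if k = m then R else 0)) = (\<lambda>k. if k = m then \<pi> m * R else 0)"
      by auto
    show ?thesis unfolding distrib_left sum.distrib f by simp
  qed
  moreover have "(\<Sum>k\<in>UNIV. \<pi> k * (1 + (\<Sum>l\<in>UNIV. P k l * H l m)))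
      = 1 + (\<Sum>l\<in>UNIV. \<pi> l * H l m)"
  proof -
    have "(\<Sum>k\<in>UNIV. \<pi> k * (\<Sum>l\<in>UNIV. P k l * H l m)) = (\<Sum>l\<in>UNIV. \<Sum>k\<in>UNIV. \<pi> k * P k l * H l m)"
      by (subst sum.swap) (simp add: sum_distrib_left mult.assoc)
    also have "\<dots> = (\<Sum>l\<in>UNIV. \<pi> l * H l m)"
      by (simp add: sum_distrib_right[symmetric] pi_stat)
    finally show ?thesis by (simp add: distrib_left sum.distrib pi_sum)
  qed
  ultimately show ?thesis by (simp add: R_def)
qed

end

lemma sum_delta_right: "finite T \<Longrightarrow> m \<in> T \<Longrightarrow> (\<Sum>k\<in>T. f k * (if k = m then 1 else 0)) = (f m :: real)"
proof -
  assume "finite T" "m \<in> T"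
  have "(\<lambda>k. f k * (if k = m then 1 else 0)) = (\<lambda>k. if k = m then f k else 0)" by auto
  show ?thesis unfolding \<open>(\<lambda>k. f k * (if k = m then 1 else 0)) = (\<lambda>k. if k = m then f k else 0)\<close>
    using \<open>finite T\<close> \<open>m \<in> T\<close> by (simp add: sum.delta')
qed

lemma sum_delta_left: "finite T \<Longrightarrow> s \<in> T \<Longrightarrow> (\<Sum>k\<in>T. (if s = k then 1 else 0) * f k) = (f s :: real)"
proof -
  assume "finite T" "s \<in> T"
  have "(\<lambda>k. (if s = k then 1 else 0) * f k) = (\<lambda>k. if s = k then f k else 0)" by auto
  show ?thesis unfolding \<open>(\<lambda>k. (if s = k then 1 else 0) * f k) = (\<lambda>k. if s = k then f k else 0)\<close>
    using \<open>finite T\<close> \<open>s \<in> T\<close> by (simp add: sum.delta)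
qed

context mcpi
begin

definition G where "G j s m = \<pi> m * (H s j + H j m - H s m)"

definition nm where "nm a b = (if a = b then 1 else 0) - P a b"

lemma G_j1 [simp]: "G j j m = 0" by (simp add: G_def)
lemma G_j2 [simp]: "G j s j = 0" by (simp add: G_def)

lemma sum_Compl: "(\<Sum>l\<in>UNIV. f l) = f (j::'a) + (\<Sum>l\<in>-{j}. f l)"
  using sum.remove[of UNIV j f] by (simp add: Compl_eq_Diff_UNIV)

lemma NG:
  assumes s: "s \<noteq> j" and m: "m \<noteq> j"
  shows "(\<Sum>l\<in>-{j}. nm s l * G j l m) = (if s = m then 1 else 0)"
proof -
  have "(\<Sum>l\<in>-{j}. nm s l * G j l m) = (\<Sum>l\<in>UNIV. nm s l * G j l m)"
    using sum_Compl[of "\<lambda>l. nm s l * G j l m" j] by simp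
  also have "\<dots> = G j s m - (\<Sum>l\<in>UNIV. P s l * G j l m)"
    unfolding nm_def left_diff_distrib sum_subtractf
    by (simp add: sum_delta_left)
  also have "(\<Sum>l\<in>UNIV. P s l * G j l m)
      = \<pi> m * ((\<Sum>l\<in>UNIV. P s l * H l j) + H j m * (\<Sum>l\<in>UNIV. P s l) - (\<Sum>l\<in>UNIV. P s l * H l m))"
  proof -
    have "(\<Sum>l\<in>UNIV. P s l * G j l m) = (\<Sum>l\<in>UNIV. \<pi> m * (P s l * H l j + H j m * P s l - P s l * H l m))"
      by (rule sum.cong) (simp_all add: G_def algebra_simps)
    also have "\<dots> = \<pi> m * ((\<Sum>l\<in>UNIV. P s l * H l j) + (\<Sum>l\<in>UNIV. H j m * P s l) - (\<Sum>l\<in>UNIV. P s l * H l m))"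
      by (simp only: sum_distrib_left[symmetric] sum_subtractf sum.distrib)
    also have "(\<Sum>l\<in>UNIV. H j m * P s l) = H j m * (\<Sum>l\<in>UNIV. P s l)"
      by (simp only: sum_distrib_left)
    finally show ?thesis .
  qed
  also have "(\<Sum>l\<in>UNIV. P s l * H l j) = H s j - 1"
    using hit_step[OF s] by simp
  finally have e: "(\<Sum>l\<in>-{j}. nm s l * G j l m) = G j s m -
     \<pi> m * (H s j - 1 + H j m - (\<Sum>l\<in>UNIV. P s l * H l m))"
    by (simp add: P_rows)
  show ?thesis
  proof (cases "s = m")
    case True
    then show ?thesis using e kac[of m] by (simp add: G_def algebra_simps)
  next
    case False
    then show ?thesis using e hit_step[OF False] by (simp add: G_def algebra_simps)
  qed
qed

lemma fund_unique:
  assumes F1: "\<forall>s\<in>-{j}. \<forall>m\<in>-{j}. (\<Sum>k\<in>-{j}. F s k * ((if k = m then 1 else 0) - P k m))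
                          = (if s = m then 1 else 0)"
    and F2: "\<forall>s m. (s = j \<or> m = j) \<longrightarrow> F s m = 0"
  shows "F = G j"
proof (intro ext)
  fix s m
  show "F s m = G j s m"
  proof (cases "s = j \<or> m = j")
    case True
    then show ?thesis using F2 by auto
  next
    case False
    then have sT: "s \<in> -{j}" and mT: "m \<in> -{j}" by auto
    have "F s m = (\<Sum>k\<in>-{j}. F s k * (if k = m then 1 else 0))"
      using mT by (simp add: sum_delta_right)
    also have "\<dots> = (\<Sum>k\<in>-{j}. F s k * (\<Sum>l\<in>-{j}. nm k l * G j l m))"
      by (rule sum.cong) (use NG False in auto)
    also have "\<dots> = (\<Sum>l\<in>-{j}. (\<Sum>k\<in>-{j}. F s k * nm k l) * G j l m)"
      by (simp only: sum_distrib_left sum_distrib_right mult.assoc) (rule sum.swap)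
    also have "\<dots> = (\<Sum>l\<in>-{j}. (if s = l then 1 else 0) * G j l m)"
      by (rule sum.cong) (use F1 sT in \<open>auto simp: nm_def\<close>)
    also have "\<dots> = G j s m" using sT by (simp add: sum_delta_left)
    finally show ?thesis .
  qed
qed

lemma fund_exists:
  assumes sT: "s \<noteq> j" and mT: "m \<noteq> j"
  shows "(\<Sum>k\<in>-{j}. G j s k * ((if k = m then 1 else 0) - P k m)) = (if s = m then 1 else 0)"
proof -
  define v where "v l = (if l = j then 0 else (\<Sum>k\<in>-{j}. G j l k * nm k m) - (if l = m then 1 else 0))" for l
  have vj: "v j = 0" by (simp add: v_def)
  have vs: "v s = (\<Sum>l\<in>UNIV. P s l * v l)" if s: "s \<noteq> j" for s
  proof -
    have "(\<Sum>l\<in>-{j}. nm s l * (\<Sum>k\<in>-{j}. G j l k * nm k m))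
        = (\<Sum>k\<in>-{j}. (\<Sum>l\<in>-{j}. nm s l * G j l k) * nm k m)"
      by (simp only: sum_distrib_left sum_distrib_right mult.assoc) (rule sum.swap)
    also have "\<dots> = (\<Sum>k\<in>-{j}. (if s = k then 1 else 0) * nm k m)"
      by (rule sum.cong) (use NG s in auto)
    also have "\<dots> = nm s m" using s by (simp add: sum_delta_left)
    finally have a: "(\<Sum>l\<in>-{j}. nm s l * (\<Sum>k\<in>-{j}. G j l k * nm k m)) = nm s m" .
    have b: "(\<Sum>l\<in>-{j}. nm s l * (if l = m then 1 else 0)) = nm s m"
      using mT by (simp add: sum_delta_right)
    have "(\<Sum>l\<in>-{j}. nm s l * v l) = (\<Sum>l\<in>-{j}. nm s l * ((\<Sum>k\<in>-{j}. G j l k * nm k m) - (if l = m then 1 else 0)))"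
      by (rule sum.cong) (auto simp: v_def)
    also have "\<dots> = 0" unfolding right_diff_distrib sum_subtractf a b by simp
    finally have c: "(\<Sum>l\<in>-{j}. nm s l * v l) = 0" .
    have "(\<Sum>l\<in>-{j}. nm s l * v l) = (\<Sum>l\<in>UNIV. nm s l * v l)"
      using sum_Compl[of "\<lambda>l. nm s l * v l" j] vj by simp
    also have "\<dots> = v s - (\<Sum>l\<in>UNIV. P s l * v l)"
      unfolding nm_def left_diff_distrib sum_subtractf by (simp add: sum_delta_left)
    finally show ?thesis using c by simp
  qed
  have le: "v l \<le> 0" for l by (rule maxp[of v j, OF vj vs])
  have ge: "- v l \<le> 0" for l
  proof (rule maxp[of "\<lambda>l. - v l" j])
    show "- v j = 0" using vj by simp
    fix s assume "s \<noteq> j"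
    then show "- v s = (\<Sum>l\<in>UNIV. P s l * - v l)" using vs by (simp add: sum_negf)
  qed
  have "v s = 0" using le[of s] ge[of s] by simp
  then show ?thesis using sT by (simp add: v_def nm_def)
qed

lemma fund_mat_eq: "fund_mat P j = G j"
  unfolding fund_mat_def
proof (rule the_equality)
  show "(\<forall>s\<in>-{j}. \<forall>m\<in>-{j}. (\<Sum>k\<in>-{j}. G j s k * ((if k = m then 1 else 0) - P k m)) = (if s = m then 1 else 0)) \<and>
    (\<forall>s m. s = j \<or> m = j \<longrightarrow> G j s m = 0)"
    using fund_exists by auto
next
  fix F
  assume "(\<forall>s\<in>-{j}. \<forall>m\<in>-{j}. (\<Sum>k\<in>-{j}. F s k * ((if k = m then 1 else 0) - P k m)) = (if s = m then 1 else 0)) \<and>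
    (\<forall>s m. s = j \<or> m = j \<longrightarrow> F s m = 0)"
  then show "F = G j" using fund_unique by blast
qed

lemma tensor_eq: "fund_tensor P i m j = \<pi> m * (H i j + H j m - H i m)"
  by (auto simp: fund_tensor_def fund_mat_eq G_def)

end

theorem mainTheorem10:
  fixes A :: "'a::finite \<Rightarrow> 'a \<Rightarrow> real" and \<pi> :: "'a \<Rightarrow> real"
  assumes nonneg: "\<forall>i j. A i j \<ge> 0"
    and sc: "strongly_connected A"
    and stat: "stationary_distribution (trans_mat A) \<pi>"
  defines "P \<equiv> trans_mat A"
  shows "\<forall>i j m.
      fund_tensor P i i j = \<pi> i * commute_time P i j \<and>
      fund_tensor P i m j / \<pi> m + fund_tensor P m i j / \<pi> i
        = commute_time P i j + commute_time P j m - commute_time P i m \<and>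
      fund_tensor P i m j / \<pi> m + fund_tensor P i j m / \<pi> j = commute_time P j m \<and>
      fund_tensor P i m j + fund_tensor P j m i = \<pi> m * commute_time P i j"
proof -
  have st1: "\<forall>i. 0 \<le> \<pi> i" and st2: "(\<Sum>i\<in>UNIV. \<pi> i) = 1"
    and st3: "\<And>j. (\<Sum>i\<in>UNIV. \<pi> i * P i j) = \<pi> j"
    using stat by (auto simp: stationary_distribution_def P_def)
  have deg_pos: "0 < degree A i" for i
  proof (rule ccontr)
    assume "\<not> 0 < degree A i"
    moreover have "0 \<le> degree A i" unfolding degree_def by (rule sum_nonneg) (use nonneg in auto)
    ultimately have "degree A i = 0" by simp
    then have A0: "A i l = 0" for l
      using sum_nonneg_eq_0_iff[of UNIV "A i"] nonneg by (simp add: degree_def)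
    have all: "l = i" for l
    proof -
      have "(i, l) \<in> {(x, y). A x y > 0}\<^sup>*" using sc by (simp add: strongly_connected_def)
      then show ?thesis
        by (rule converse_rtranclE) (use A0 in auto)
    qed
    then have U: "(UNIV::'a set) = {i}" by auto
    have "\<pi> i * P i i = \<pi> i" using st3[of i] by (simp add: U)
    moreover have "P i i = 0" using \<open>degree A i = 0\<close> by (simp add: P_def trans_mat_def)
    ultimately have "\<pi> i = 0" by simp
    then show False using st2 by (simp add: U)
  qed
  have Ppos: "P x y > 0 \<longleftrightarrow> A x y > 0" for x y
    using deg_pos[of x] by (simp add: P_def trans_mat_def zero_less_divide_iff)
  interpret mcpi P \<pi>
  proof
    show "0 \<le> P i j" for i j using nonneg deg_pos[of i] by (simp add: P_def trans_mat_def)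
    show "(\<Sum>j\<in>UNIV. P i j) = 1" for i
      using deg_pos[of i] by (simp add: P_def trans_mat_def sum_divide_distrib[symmetric] degree_def[symmetric])
    show "(i, j) \<in> {(x, y). P x y > 0}\<^sup>*" for i j
      using sc by (simp add: strongly_connected_def Ppos)
    show "0 \<le> \<pi> i" for i using st1 by simp
    show "(\<Sum>i\<in>UNIV. \<pi> i) = 1" by (rule st2)
    show "(\<Sum>i\<in>UNIV. \<pi> i * P i j) = \<pi> j" for j by (rule st3)
  qed
  show ?thesis
  proof (intro allI)
    fix i j m
    have pm: "\<pi> m \<noteq> 0" "\<pi> i \<noteq> 0" "\<pi> j \<noteq> 0" using pi_pos by (auto simp: less_le)
    show "fund_tensor P i i j = \<pi> i * commute_time P i j \<and>
      fund_tensor P i m j / \<pi> m + fund_tensor P m i j / \<pi> i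
        = commute_time P i j + commute_time P j m - commute_time P i m \<and>
      fund_tensor P i m j / \<pi> m + fund_tensor P i j m / \<pi> j = commute_time P j m \<and>
      fund_tensor P i m j + fund_tensor P j m i = \<pi> m * commute_time P i j"
      using pm by (simp add: tensor_eq commute_time_def nonzero_mult_div_cancel_left) (simp add: algebra_simps)
  qed
qed

end
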